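(* Let $A,B,C,D,E$ be five distinct points in the plane, not all collinear, such that $$AB\parallel EC,\quad BC\parallel AD,\quad CD\parallel BE,\quad DE\parallel CA,\quad EA\parallel DB.$$ Then $ABCDE$ is either an affine regular pentagon or an affine regular star pentagon. That is, there exist an affine bijection $f$ of the plane and a regular pentagon with vertices $V_0,\dots,V_4$ in cyclic order such that either $$(A,B,C,D,E)=(f(V_0),f(V_1),f(V_2),f(V_3),f(V_4))$$ or $$(A,B,C,D,E)=(f(V_0),f(V_2),f(V_4),f(V_1),f(V_3)).$$
   Context: An affine map of the plane is a bijection of the plane that maps collinear points to collinear points. $XY\parallel ZW$ means that the line through $X,Y$ is parallel to the line through $Z,W$. *)

theory Defs
  imports "HOL-Analysis.Analysis"
begin

definition line_through :: "complex \<Rightarrow> complex \<Rightarrow> complex set" where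
  "line_through X Y = affine hull {X, Y}"

text \<open>XY parallel ZW: the line ZW is a translate of the line XY (coincidence allowed).\<close>
definition par :: "complex \<Rightarrow> complex \<Rightarrow> complex \<Rightarrow> complex \<Rightarrow> bool" where
  "par X Y Z W \<longleftrightarrow> (\<exists>v. line_through Z W = (\<lambda>p. v + p) ` line_through X Y)"

definition affine_map :: "(complex \<Rightarrow> complex) \<Rightarrow> bool" where
  "affine_map f \<longleftrightarrow> bij f \<and>
     (\<forall>x y z. collinear {x, y, z} \<longrightarrow> collinear {f x, f y, f z})"

definition regular_pentagon :: "(nat \<Rightarrow> complex) \<Rightarrow> bool" where
  "regular_pentagon V \<longleftrightarrow> (\<exists>c w \<omega>. w \<noteq> 0 \<and>
     (\<omega> = cis (2 * pi / 5) \<or> \<omega> = cis (- 2 * pi / 5)) \<and>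
     (\<forall>k<5. V k = c + w * \<omega> ^ k))"

end

theory Submission
  imports Defs
begin

definition dt :: "complex \<Rightarrow> complex \<Rightarrow> real" where
  "dt p q = Re p * Im q - Im p * Re q"

lemma dt_rep:
  assumes "dt u v \<noteq> 0"
  shows "w = of_real (dt w v / dt u v) * u + of_real (dt u w / dt u v) * v"
proof -
  let ?d = "dt u v"
  have 1: "Re w * ?d = dt w v * Re u + dt u w * Re v" by (simp add: dt_def algebra_simps)
  have 2: "Im w * ?d = dt w v * Im u + dt u w * Im v" by (simp add: dt_def algebra_simps)
  have "Re w = dt w v / ?d * Re u + dt u w / ?d * Re v"
    using 1 assms by (simp add: field_simps)
  moreover have "Im w = dt w v / ?d * Im u + dt u w / ?d * Im v"
    using 2 assms by (simp add: field_simps)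
  ultimately show ?thesis by (simp add: complex_eq_iff)
qed

lemma dt_lin:
  "dt (of_real a * u + of_real b * v) (of_real c * u + of_real d * v) = (a*d - b*c) * dt u v"
  by (simp add: dt_def algebra_simps)

lemma dt_lin1: "dt (of_real a * u + of_real b * v) v = a * dt u v"
  by (simp add: dt_def algebra_simps)

lemma dt_lin2: "dt u (of_real a * u + of_real b * v) = b * dt u v"
  by (simp add: dt_def algebra_simps)

lemma dt_scale: "dt X (c *\<^sub>R X) = 0"
  by (simp add: dt_def algebra_simps)

lemma par_dt:
  assumes "par X Y Z W"
  shows "dt (X - Y) (Z - W) = 0"
proof -
  obtain v where v: "affine hull {Z, W} = (\<lambda>p. v + p) ` (affine hull {X, Y})"
    using assms unfolding par_def line_through_def by blast
  have "Z \<in> (\<lambda>p. v + p) ` (affine hull {X, Y})" "W \<in> (\<lambda>p. v + p) ` (affine hull {X, Y})"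
    using v hull_subset[of "{Z,W}" affine] by auto
  then obtain a b where ab: "a \<in> affine hull {X,Y}" "b \<in> affine hull {X,Y}" "Z = v + a" "W = v + b"
    by blast
  obtain s1 s2 where s: "s1 + s2 = 1" "a = s1 *\<^sub>R X + s2 *\<^sub>R Y"
    using ab(1) unfolding affine_hull_2 by blast
  obtain r1 r2 where r: "r1 + r2 = 1" "b = r1 *\<^sub>R X + r2 *\<^sub>R Y"
    using ab(2) unfolding affine_hull_2 by blast
  have "Z - W = (s1 - r1) *\<^sub>R (X - Y)"
    using s r ab by (simp add: algebra_simps) (metis add_diff_cancel_left' diff_add_cancel scaleR_left_diff_distrib)
  then show ?thesis by (simp add: dt_scale)
qed

lemma dt_diff1: "dt (a - b) q = dt a q - dt b q" by (simp add: dt_def algebra_simps)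
lemma dt_diff2: "dt p (a - b) = dt p a - dt p b" by (simp add: dt_def algebra_simps)
lemma dt_scale1: "dt (c *\<^sub>R a) q = c * dt a q" by (simp add: dt_def algebra_simps)
lemma dt_scale2: "dt p (c *\<^sub>R a) = c * dt p a" by (simp add: dt_def algebra_simps)

lemma transfer:
  assumes pq: "dt p q \<noteq> 0" and uv: "dt u v \<noteq> 0"
  shows "\<exists>f. affine_map f \<and>
    (\<forall>x y. f (z0 + of_real x * p + of_real y * q) = A + of_real x * u + of_real y * v)"
proof -
  define L where "L w = of_real (dt w q / dt p q) * u + of_real (dt p w / dt p q) * v" for w
  define f where "f w = A + L (w - z0)" for w
  have Lc: "L (of_real x * p + of_real y * q) = of_real x * u + of_real y * v" for x y
    using pq unfolding L_def by (simp add: dt_lin1 dt_lin2)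
  have fc: "f (z0 + of_real x * p + of_real y * q) = A + of_real x * u + of_real y * v" for x y
    unfolding f_def using Lc[of x y] by (simp add: add.assoc)
  have Ldiff: "L a - L b = L (a - b)" for a b
    unfolding L_def by (simp add: dt_diff1 dt_diff2 diff_divide_distrib algebra_simps)
  have Lscale: "L (c *\<^sub>R a) = c *\<^sub>R L a" for c a
    unfolding L_def dt_scale1 dt_scale2 by (simp add: scaleR_conv_of_real algebra_simps)
  have inj: "inj f"
  proof (rule injI)
    fix w1 w2 assume "f w1 = f w2"
    then have "L (w1 - z0) = L (w2 - z0)" unfolding f_def by simp
    then have e: "dt (L (w1 - z0)) v = dt (L (w2 - z0)) v" "dt u (L (w1 - z0)) = dt u (L (w2 - z0))"
      by simp_all
    have "dt (w1 - z0) q = dt (w2 - z0) q" "dt p (w1 - z0) = dt p (w2 - z0)"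
      using e pq uv unfolding L_def dt_lin1 dt_lin2 by (simp_all add: field_simps)
    then have "w1 - z0 = w2 - z0"
      using dt_rep[OF pq, of "w1 - z0"] dt_rep[OF pq, of "w2 - z0"] by simp
    then show "w1 = w2" by simp
  qed
  have surj: "surj f"
  proof (rule surjI)
    fix z
    show "f (z0 + of_real (dt (z - A) v / dt u v) * p + of_real (dt u (z - A) / dt u v) * q) = z"
      unfolding fc using dt_rep[OF uv, of "z - A"] by (simp add: add.assoc)
  qed
  have col: "collinear {f x, f y, f z}" if hc: "collinear {x, y, z}" for x y z
  proof -
    obtain d where d: "\<forall>a\<in>{x,y,z}. \<forall>b\<in>{x,y,z}. \<exists>c. a - b = c *\<^sub>R d"
      using hc unfolding collinear_def by blast
    have "\<forall>a\<in>{f x, f y, f z}. \<forall>b\<in>{f x, f y, f z}. \<exists>c. a - b = c *\<^sub>R L d"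
    proof (intro ballI)
      fix a b assume "a \<in> {f x, f y, f z}" "b \<in> {f x, f y, f z}"
      then obtain a' b' where ab: "a' \<in> {x,y,z}" "b' \<in> {x,y,z}" "a = f a'" "b = f b'" by blast
      then obtain c where c: "a' - b' = c *\<^sub>R d" using d by blast
      have "a - b = L (a' - z0) - L (b' - z0)" using ab unfolding f_def by simp
      also have "\<dots> = L (a' - b')" by (simp add: Ldiff)
      also have "\<dots> = c *\<^sub>R L d" using c Lscale by simp
      finally show "\<exists>c. a - b = c *\<^sub>R L d" by blast
    qed
    then show ?thesis unfolding collinear_def by blast
  qed
  have "affine_map f" unfolding affine_map_def bij_def using inj surj col by blast
  then show ?thesis using fc by blast
qed

lemma dt_par_real:
  assumes "dt p w = 0" "p \<noteq> 0"
  shows "\<exists>k. w = of_real k * p"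
proof -
  have n: "Re p ^ 2 + Im p ^ 2 \<noteq> 0" using assms(2)
    by (simp add: complex_eq_iff)
  define k where "k = (Re p * Re w + Im p * Im w) / (Re p ^ 2 + Im p ^ 2)"
  have "Re w * (Re p ^ 2 + Im p ^ 2) = (Re p * Re w + Im p * Im w) * Re p"
    "Im w * (Re p ^ 2 + Im p ^ 2) = (Re p * Re w + Im p * Im w) * Im p"
    using assms(1) unfolding dt_def by (simp_all add: power2_eq_square algebra_simps)
  then have "w = of_real k * p" using n unfolding k_def
    by (simp add: complex_eq_iff field_simps)
  then show ?thesis by blast
qed

lemma col_line:
  assumes "\<forall>P\<in>S. \<exists>s. P = A + of_real s * u"
  shows "collinear S"
proof -
  have *: "\<exists>c. P - Q = c *\<^sub>R u" if hP: "P \<in> S" and hQ: "Q \<in> S" for P Q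
  proof -
    obtain s where s: "P = A + of_real s * u" using assms hP by (meson bspec)
    obtain s' where s': "Q = A + of_real s' * u" using assms hQ by (meson bspec)
    have "P - Q = (s - s') *\<^sub>R u" using s s' by (simp add: scaleR_conv_of_real algebra_simps)
    then show ?thesis by (rule exI)
  qed
  show ?thesis unfolding collinear_def
    by (rule exI[of _ u]) (intro ballI *)
qed

lemma dt_coords:
  assumes "P = A + of_real px * u + of_real py * v" "Q = A + of_real qx * u + of_real qy * v"
    "R = A + of_real rx * u + of_real ry * v" "S = A + of_real sx * u + of_real sy * v"
  shows "dt (P - Q) (R - S) = ((px-qx)*(ry-sy) - (py-qy)*(rx-sx)) * dt u v"
proof -
  have e: "P - Q = of_real (px-qx) * u + of_real (py-qy) * v"
    "R - S = of_real (rx-sx) * u + of_real (ry-sy) * v"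
    using assms by (simp_all add: algebra_simps)
  have "dt (P - Q) (R - S) = dt (of_real (px-qx) * u + of_real (py-qy) * v)
     (of_real (rx-sx) * u + of_real (ry-sy) * v)" by (simp only: e)
  also have "\<dots> = ((px-qx)*(ry-sy) - (py-qy)*(rx-sx)) * dt u v" by (rule dt_lin)
  finally show ?thesis .
qed

lemma dt_mult: "dt p (z * p) = Im z * (Re p ^ 2 + Im p ^ 2)"
  by (simp add: dt_def power2_eq_square algebra_simps)

lemma dt_root:
  assumes "Im \<zeta> \<noteq> 0"
  shows "dt (\<zeta> - 1) (\<zeta>^2 - 1) \<noteq> 0"
proof -
  have "\<zeta>^2 - 1 = (\<zeta> + 1) * (\<zeta> - 1)" by (simp add: power2_eq_square algebra_simps)
  moreover have "Re (\<zeta> - 1) ^ 2 + Im (\<zeta> - 1) ^ 2 \<noteq> 0" using assms by simp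
  ultimately show ?thesis using assms by (simp add: dt_mult)
qed

definition \<omega> :: complex where "\<omega> = cis (2 * pi / 5)"

lemma om5: "\<omega> ^ 5 = 1"
proof -
  show ?thesis unfolding \<omega>_def Complex.DeMoivre by simp
qed

lemma om_im: "Im \<omega> \<noteq> 0"
proof -
  have "sin (2 * pi / 5) > 0" by (rule sin_gt_zero) (simp_all add: pi_gt_zero)
  then show ?thesis unfolding \<omega>_def by simp
qed

lemma om2_im: "Im (\<omega>^2) \<noteq> 0"
proof -
  have "\<omega>^2 = cis (real 2 * (2 * pi / 5))" unfolding \<omega>_def Complex.DeMoivre by simp
  moreover have "sin (real 2 * (2 * pi / 5)) > 0" by (rule sin_gt_zero) (simp_all add: pi_gt_zero)
  ultimately show ?thesis by simp
qed

lemma om_sum: "1 + \<omega> + \<omega>^2 + \<omega>^3 + \<omega>^4 = 0"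
proof -
  have "\<omega> \<noteq> 1" using om_im by auto
  moreover have "(\<omega> - 1) * (1 + \<omega> + \<omega>^2 + \<omega>^3 + \<omega>^4) = \<omega>^5 - 1"
    by (simp add: algebra_simps eval_nat_numeral)
  ultimately show ?thesis using om5 by simp
qed

lemma om_c: "\<omega> + \<omega>^4 = of_real (2 * Re \<omega>)"
proof -
  have "\<omega> * \<omega>^4 = \<omega>^5" by (simp add: eval_nat_numeral)
  then have "\<omega> * \<omega>^4 = 1" using om5 by simp
  then have "inverse \<omega> = \<omega>^4" by (rule inverse_unique)
  then have "\<omega>^4 = inverse \<omega>" by (rule sym)
  also have "inverse \<omega> = cnj \<omega>" unfolding \<omega>_def by (simp only: cis_inverse cis_cnj)
  finally show ?thesis by (simp add: complex_add_cnj)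
qed

lemma c_quad: "(2 * Re \<omega>)^2 + 2 * Re \<omega> - 1 = 0"
proof -
  have "(\<omega> + \<omega>^4)^2 + (\<omega> + \<omega>^4) - 1 = 0"
    using om5 om_sum by algebra
  then have "complex_of_real ((2 * Re \<omega>)^2 + 2 * Re \<omega> - 1) = 0"
    unfolding om_c by simp
  then show ?thesis by (simp only: of_real_eq_0_iff)
qed

theorem proposition2:
  fixes A B C D E :: complex
  assumes "distinct [A, B, C, D, E]"
    and "\<not> collinear {A, B, C, D, E}"
    and "par A B E C" and "par B C A D" and "par C D B E"
    and "par D E C A" and "par E A D B"
  shows "\<exists>f V. affine_map f \<and> regular_pentagon V \<and>
           ((A, B, C, D, E) = (f (V 0), f (V 1), f (V 2), f (V 3), f (V 4)) \<or>
            (A, B, C, D, E) = (f (V 0), f (V 2), f (V 4), f (V 1), f (V 3)))"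
proof -
  define u where "u = B - A"
  define v where "v = C - A"
  have uv: "dt u v \<noteq> 0"
  proof
    assume h: "dt u v = 0"
    have u0: "u \<noteq> 0" using assms(1) unfolding u_def by auto
    obtain k where k: "C - A = of_real k * u" using dt_par_real[OF h u0] unfolding v_def by blast
    have ab0: "A - B \<noteq> 0" using assms(1) by auto
    obtain m where m: "E - C = of_real m * (A - B)"
      using dt_par_real[OF par_dt[OF assms(3)] ab0] by blast
    have bc0: "B - C \<noteq> 0" using assms(1) by auto
    obtain n where n: "A - D = of_real n * (B - C)"
      using dt_par_real[OF par_dt[OF assms(4)] bc0] by blast
    have "A = A + of_real 0 * u" by simp
    moreover have "B = A + of_real 1 * u" unfolding u_def by simp
    moreover have "C = A + of_real k * u" using k by algebra
    moreover have "E = A + of_real (k - m) * u"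
      using k m unfolding u_def of_real_diff by algebra
    moreover have "D = A + of_real (- n * (1 - k)) * u"
    proof -
      have "B - C = of_real (1 - k) * u" using k unfolding u_def by (simp add: algebra_simps)
      then show ?thesis using n unfolding of_real_mult of_real_minus by algebra
    qed
    ultimately have "\<forall>P\<in>{A, B, C, D, E}. \<exists>s. P = A + of_real s * u" by blast
    then have "collinear {A, B, C, D, E}" by (rule col_line)
    with assms(2) show False by blast
  qed
  define d1 where "d1 = dt (D - A) v / dt u v"
  define d2 where "d2 = dt u (D - A) / dt u v"
  define e1 where "e1 = dt (E - A) v / dt u v"
  define e2 where "e2 = dt u (E - A) / dt u v"
  have pA: "A = A + of_real 0 * u + of_real 0 * v" by simp
  have pB: "B = A + of_real 1 * u + of_real 0 * v" unfolding u_def by simp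
  have pC: "C = A + of_real 0 * u + of_real 1 * v" unfolding v_def by simp
  have pD: "D = A + of_real d1 * u + of_real d2 * v"
    using dt_rep[OF uv, of "D - A"] unfolding d1_def d2_def by (simp add: algebra_simps)
  have pE: "E = A + of_real e1 * u + of_real e2 * v"
    using dt_rep[OF uv, of "E - A"] unfolding e1_def e2_def by (simp add: algebra_simps)
  have q1: "((0-1)*(e2-1) - (0-0)*(e1-0)) * dt u v = 0"
    using dt_coords[OF pA pB pE pC] par_dt[OF assms(3)] by simp
  have q2: "((1-0)*(0-d2) - (0-1)*(0-d1)) * dt u v = 0"
    using dt_coords[OF pB pC pA pD] par_dt[OF assms(4)] by simp
  have q3: "((0-d1)*(0-e2) - (1-d2)*(1-e1)) * dt u v = 0"
    using dt_coords[OF pC pD pB pE] par_dt[OF assms(5)] by simp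
  have q4: "((d1-e1)*(1-0) - (d2-e2)*(0-0)) * dt u v = 0"
    using dt_coords[OF pD pE pC pA] par_dt[OF assms(6)] by simp
  from q1 q2 q3 q4 uv have e2: "e2 = 1" and d2: "d2 = - d1" and e1: "e1 = d1"
    and q3': "(0-d1)*(0-e2) - (1-d2)*(1-e1) = 0" by auto
  define t where "t = d1"
  have tq: "t^2 + t - 1 = 0" using q3' e2 d2 e1 unfolding t_def by (simp add: power2_eq_square algebra_simps)
  have pD': "D = A + of_real t * u + of_real (-t) * v" using pD d2 unfolding t_def by simp
  have pE': "E = A + of_real t * u + of_real 1 * v" using pE e1 e2 unfolding t_def by simp
  define c where "c = 2 * Re \<omega>"
  have cq: "c^2 + c - 1 = 0" unfolding c_def by (rule c_quad)
  have cw: "complex_of_real c = \<omega> + \<omega>^4" unfolding c_def by (simp add: om_c)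
  have "(t - c) * (t + c + 1) = 0" using tq cq by (simp add: power2_eq_square algebra_simps)
  then have "t = -1 - c \<or> t = c" by auto
  have regV: "regular_pentagon (\<lambda>k. \<omega>^k)"
    unfolding regular_pentagon_def
    by (rule exI[of _ 0], rule exI[of _ 1], rule exI[of _ \<omega>]) (simp add: \<omega>_def)
  show ?thesis
  proof (cases "t = -1 - c")
    case True
    then have tw: "complex_of_real t = -1 - \<omega> - \<omega>^4" using cw by simp
    obtain f where f: "affine_map f"
      and fc: "\<And>x y. f (1 + of_real x * (\<omega> - 1) + of_real y * (\<omega>^2 - 1)) = A + of_real x * u + of_real y * v"
      using transfer[OF dt_root[OF om_im] uv, of 1 A] by blast
    have "f 1 = A" using fc[of 0 0] by simp
    moreover have "f \<omega> = B" using fc[of 1 0] pB by simp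
    moreover have "f (\<omega>^2) = C" using fc[of 0 1] pC by simp
    moreover have "f (\<omega>^3) = D"
    proof -
      have "\<omega>^3 = 1 + (-1 - \<omega> - \<omega>^4) * (\<omega> - 1) + (-(-1 - \<omega> - \<omega>^4)) * (\<omega>^2 - 1)"
        using om5 by algebra
      then have "\<omega>^3 = 1 + of_real t * (\<omega> - 1) + of_real (-t) * (\<omega>^2 - 1)"
        unfolding of_real_minus tw .
      then show ?thesis using fc[of t "-t"] pD' by simp
    qed
    moreover have "f (\<omega>^4) = E"
    proof -
      have "\<omega>^4 = 1 + (-1 - \<omega> - \<omega>^4) * (\<omega> - 1) + 1 * (\<omega>^2 - 1)"
        using om5 by algebra
      then have "\<omega>^4 = 1 + of_real t * (\<omega> - 1) + of_real 1 * (\<omega>^2 - 1)"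
        unfolding of_real_1 tw .
      then show ?thesis using fc[of t 1] pE' by simp
    qed
    ultimately show ?thesis using f regV
      by (intro exI[of _ f] exI[of _ "\<lambda>k. \<omega>^k"]) simp
  next
    case False
    with \<open>t = -1 - c \<or> t = c\<close> have "t = c" by blast
    then have tw: "complex_of_real t = \<omega> + \<omega>^4" using cw by simp
    obtain f where f: "affine_map f"
      and fc: "\<And>x y. f (1 + of_real x * (\<omega>^2 - 1) + of_real y * ((\<omega>^2)^2 - 1)) = A + of_real x * u + of_real y * v"
      using transfer[OF dt_root[OF om2_im] uv, of 1 A] by blast
    have w4: "(\<omega>^2)^2 = \<omega>^4" by (simp add: power_mult[symmetric])
    have "f 1 = A" using fc[of 0 0] by simp
    moreover have "f (\<omega>^2) = B" using fc[of 1 0] pB by simp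
    moreover have "f (\<omega>^4) = C" using fc[of 0 1] pC w4 by simp
    moreover have "f \<omega> = D"
    proof -
      have "\<omega> = 1 + (\<omega> + \<omega>^4) * (\<omega>^2 - 1) + (-(\<omega> + \<omega>^4)) * ((\<omega>^2)^2 - 1)"
        using om5 by algebra
      then have "\<omega> = 1 + of_real t * (\<omega>^2 - 1) + of_real (-t) * ((\<omega>^2)^2 - 1)"
        unfolding of_real_minus tw .
      then show ?thesis using fc[of t "-t"] pD' by simp
    qed
    moreover have "f (\<omega>^3) = E"
    proof -
      have "\<omega>^3 = 1 + (\<omega> + \<omega>^4) * (\<omega>^2 - 1) + 1 * ((\<omega>^2)^2 - 1)"
        using om5 by algebra
      then have "\<omega>^3 = 1 + of_real t * (\<omega>^2 - 1) + of_real 1 * ((\<omega>^2)^2 - 1)"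
        unfolding of_real_1 tw .
      then show ?thesis using fc[of t 1] pE' by simp
    qed
    ultimately show ?thesis using f regV
      by (intro exI[of _ f] exI[of _ "\<lambda>k. \<omega>^k"]) simp
  qed
qed

end
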